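(* Consider the controlled SI optimal control problem described in the context, with one control per node ($M=N$), given (fixed) initial conditions, and quadratic costs $g_j(u)=c_ju^2$ with $c_j>0$ for $1\le j\le N$. Let $(\boldsymbol i^*(t), \boldsymbol\lambda^*(t), \boldsymbol u^*(t))$, $t\in[0,T]$, be an optimal state trajectory, its associated adjoint trajectory, and optimal controls satisfying the Pontryagin Maximum Principle conditions listed in the context. Then each optimal control $u_j^*(t)$, $1\le j\le N$, is a convex function of $t$ on $[0,T]$.
   Context: Let $N\geq 1$, and let $\boldsymbol A=(A_{jk})$ be an $N\times N$ symmetric matrix with entries in $\{0,1\}$ (adjacency matrix of an undirected, unweighted network on nodes $1,\dots,N$). Fix $\beta>0$, a horizon $T>0$, and initial values $x_{0j}\in[0,1]$. Each node $j$ has its own control $u_j(t)$. The state $i_j(t)\in[0,1]$ (probability node $j$ is informed), with $s_j(t)=1-i_j(t)$, evolves by $\dot i_j(t)=\beta s_j(t)\sum_{k=1}^N A_{jk}i_k(t)+u_j(t)s_j(t)$, $i_j(0)=x_{0j}$, $1\le j\le N$. The objective to be maximized is $J=\frac1N\sum_{j=1}^N i_j(T)-\sum_{j=1}^N\int_0^T g_j(u_j(t))\,dt$. The optimal controls are nonnegative: $u_j^*(t)\ge 0$. The Hamiltonian is $H(\boldsymbol i,\boldsymbol\lambda,\boldsymbol u)=-\sum_{j=1}^N g_j(u_j)+\sum_{l=1}^N\lambda_l\big(\beta s_l\sum_{k=1}^N A_{lk}i_k+u_l s_l\big)$ with $s_l=1-i_l$. The Pontryagin conditions are: $\boldsymbol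 i^*$ solves the state equations above; the adjoint variables satisfy $\dot\lambda_j^*(t)=-\beta\sum_{l=1}^N\lambda_l^*(t)s_l^*(t)A_{lj}+\beta\lambda_j^*(t)\sum_{k=1}^N A_{jk}i_k^*(t)+\lambda_j^*(t)u_j^*(t)$ with $\lambda_j^*(T)=1/N$; and for each $t$, $\boldsymbol u^*(t)$ maximizes $H(\boldsymbol i^*(t),\boldsymbol\lambda^*(t),\cdot)$, which gives $g_j'(u_j^*(t))=\lambda_j^*(t)s_j^*(t)$ for each $j$. *)

theory Defs
  imports "HOL-Analysis.Analysis"
begin

end

theory Submission
  imports Defs
begin


lemma deriv_at_interior:
  assumes "(f has_real_derivative D) (at t within {a..b})" "a < t" "t < b"
  shows "(f has_real_derivative D) (at t)"
  using assms at_within_Icc_at by metis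

lemma antitone_within:
  fixes f f' :: "real \<Rightarrow> real"
  assumes d: "\<forall>t\<in>{0..T}. (f has_real_derivative f' t) (at t within {0..T})"
    and n: "\<forall>t\<in>{0..T}. f' t \<le> 0"
    and xy: "0 \<le> x" "x \<le> y" "y \<le> T"
  shows "f y \<le> f x"
proof -
  have c: "continuous_on {0..T} f" using d by (intro DERIV_continuous_on) auto
  show ?thesis
  proof (rule DERIV_nonpos_imp_decreasing_open[OF xy(2)])
    fix z assume "x < z" "z < y"
    then have "(f has_real_derivative f' z) (at z)" "f' z \<le> 0"
      using d n xy by (auto intro!: deriv_at_interior[where a=0 and b=T])
    then show "\<exists>y. DERIV f z :> y \<and> y \<le> 0" by blast
  next
    show "continuous_on {x..y} f" by (rule continuous_on_subset[OF c]) (use xy in auto)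
  qed
qed

lemma gronwall_zero:
  fixes f f' :: "real \<Rightarrow> real"
  assumes d: "\<forall>t\<in>{0..T}. (f has_real_derivative f' t) (at t within {0..T})"
    and b: "\<forall>t\<in>{0..T}. f' t \<le> C * f t"
    and nn: "\<forall>t\<in>{0..T}. f t \<ge> 0" and z: "f 0 = 0"
    and t: "t \<in> {0..T}"
  shows "f t = 0"
proof -
  define g where "g = (\<lambda>t. f t * exp (- C * t))"
  have dg: "\<forall>t\<in>{0..T}. (g has_real_derivative (f' t - C * f t) * exp (- C * t)) (at t within {0..T})"
  proof
    fix t assume "t \<in> {0..T}"
    then have "(f has_real_derivative f' t) (at t within {0..T})" using d by auto
    moreover have "((\<lambda>t. - C * t) has_real_derivative - C) (at t within {0..T})"
      by (auto intro!: derivative_eq_intros)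
    ultimately have "((\<lambda>t. f t * exp (- C * t)) has_real_derivative f t * (exp (- C * t) * (- C)) + f' t * exp (- C * t)) (at t within {0..T})"
      by (intro DERIV_mult' DERIV_chain'[where g=exp, OF _ DERIV_exp]) auto
    then show "(g has_real_derivative (f' t - C * f t) * exp (- C * t)) (at t within {0..T})"
      unfolding g_def by (simp add: algebra_simps)
  qed
  have "g t \<le> g 0"
    using antitone_within[OF dg] b t by (auto simp: mult_nonpos_nonneg)
  then have "f t \<le> 0" using z by (simp add: g_def mult_le_0_iff)
  then show ?thesis using nn t by force
qed

lemma convex_within:
  fixes f f' :: "real \<Rightarrow> real"
  assumes d: "\<forall>t\<in>{0..T}. (f has_real_derivative f' t) (at t within {0..T})"
    and m: "\<And>x y. x \<in> {0..T} \<Longrightarrow> y \<in> {0..T} \<Longrightarrow> x \<le> y \<Longrightarrow> f' x \<le> f' y"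
  shows "convex_on {0..T} f"
proof (rule convex_on_linorderI)
  show "convex {0..T}" by simp
next
  have c: "continuous_on {0..T} f" using d by (intro DERIV_continuous_on) auto
  fix t x y :: real
  assume t: "t > 0" "t < 1"
  assume xy: "x \<in> {0..T}" "y \<in> {0..T}" "x < y"
  define z where "z = (1 - t) * x + t * y"
  from xy t have xz: "z > x"
    by (simp add: z_def algebra_simps)
  have "y - z = (1 - t) * (y - x)"
    by (simp add: z_def algebra_simps)
  also from xy t have "\<dots> > 0"
    by (intro mult_pos_pos) simp_all
  finally have yz: "z < y"
    by simp
  have dd: "\<And>w. x < w \<Longrightarrow> w < y \<Longrightarrow> (f has_real_derivative f' w) (at w)"
    using d xy by (auto intro!: deriv_at_interior[where a=0 and b=T])
  have cxz: "continuous_on {x..z} f" "continuous_on {z..y} f"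
    using xy xz yz by (auto intro: continuous_on_subset[OF c])
  have "\<exists>\<xi>. \<xi> > x \<and> \<xi> < z \<and> f z - f x = (z - x) * f' \<xi>"
  proof -
    obtain l w where "x < w" "w < z" "DERIV f w :> l" "f z - f x = (z - x) * l"
      using MVT[OF xz cxz(1)] dd yz real_differentiable_def by (metis less_trans)
    then show ?thesis using dd[of w] yz DERIV_unique by (metis less_trans)
  qed
  then obtain \<xi> where \<xi>: "\<xi> > x" "\<xi> < z" "f' \<xi> = (f z - f x) / (z - x)"
    by auto
  have "\<exists>\<eta>. \<eta> > z \<and> \<eta> < y \<and> f y - f z = (y - z) * f' \<eta>"
  proof -
    obtain l w where "z < w" "w < y" "DERIV f w :> l" "f y - f z = (y - z) * l"
      using MVT[OF yz cxz(2)] dd xz real_differentiable_def by (metis less_trans)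
    then show ?thesis using dd[of w] xz DERIV_unique by (metis less_trans)
  qed
  then obtain \<eta> where \<eta>: "\<eta> > z" "\<eta> < y" "f' \<eta> = (f y - f z) / (y - z)"
    by auto
  from \<eta>(3) have "(f y - f z) / (y - z) = f' \<eta>" ..
  also have "f' \<eta> \<ge> f' \<xi>"
    using \<xi> \<eta> xy by (intro m) auto
  also from \<xi>(3) have "f' \<xi> = (f z - f x) / (z - x)" .
  finally have "(f y - f z) * (z - x) \<ge> (f z - f x) * (y - z)"
    using xz yz by (simp add: field_simps)
  also have "z - x = t * (y - x)"
    by (simp add: z_def algebra_simps)
  also have "y - z = (1 - t) * (y - x)"
    by (simp add: z_def algebra_simps)
  finally have "(f y - f z) * t \<ge> (f z - f x) * (1 - t)"
    using xy by simp
  then show "(1 - t) * f x + t * f y \<ge> f ((1 - t) *\<^sub>R x + t *\<^sub>R y)"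
    by (simp add: z_def algebra_simps)
qed

definition negsq :: "real \<Rightarrow> real" where "negsq x = (min x 0)^2"

lemma negsq_deriv: "(negsq has_real_derivative 2 * min x 0) (at x)"
proof (cases "x < 0")
  case True
  have "eventually (\<lambda>y. y < 0) (nhds x)" using True eventually_nhds_in_open[of "{..<0}" x] by auto
  then have ev: "eventually (\<lambda>y. negsq y = y^2) (nhds x)"
    by eventually_elim (auto simp: negsq_def)
  have "((\<lambda>y. y^2) has_real_derivative 2 * x) (at x)"
    by (auto intro!: derivative_eq_intros)
  then show ?thesis using True DERIV_cong_ev[OF refl ev, of "2*x" "2 * min x 0"] by simp
next
  case False
  show ?thesis
  proof (cases "x > 0")
    case True
    have "eventually (\<lambda>y. y > 0) (nhds x)" using True eventually_nhds_in_open[of "{0<..}" x] by auto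
    then have ev: "eventually (\<lambda>y. negsq y = 0) (nhds x)"
      by eventually_elim (auto simp: negsq_def)
    have "((\<lambda>y. 0) has_real_derivative 0) (at x)"
      by (auto intro!: derivative_eq_intros)
    then show ?thesis using True DERIV_cong_ev[OF refl ev, of 0 "2 * min x 0"] by simp
  next
    case False
    with \<open>\<not> x < 0\<close> have x0: "x = 0" by simp
    have ev: "eventually (\<lambda>h. (negsq (0 + h) - negsq 0) / h = min h 0) (at (0::real))"
      unfolding eventually_at_filter
      by (auto simp: negsq_def power2_eq_square min_def)
    have "((\<lambda>h. min h 0) \<longlongrightarrow> min 0 0) (at (0::real))"
      by (intro tendsto_intros)
    then have "((\<lambda>h. (negsq (0 + h) - negsq 0) / h) \<longlongrightarrow> 0) (at (0::real))"
      using tendsto_cong[OF ev] by simp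
    then show ?thesis using x0 by (simp add: DERIV_def)
  qed
qed

lemma deriv_cv2: "deriv (\<lambda>v. (c::real) * v\<^sup>2) x = 2 * c * x"
  by (rule DERIV_imp_deriv) (auto intro!: derivative_eq_intros)



lemma convex_on_eq_mine:
  assumes "convex S" "\<forall>x\<in>S. f x = g x" "convex_on S f"
  shows "convex_on S g"
  using assms unfolding convex_on_def
  by (smt (verit) convexD)

theorem theorem2:
  fixes N :: nat and A :: "nat \<Rightarrow> nat \<Rightarrow> real" and \<beta> T :: real
    and x0 c :: "nat \<Rightarrow> real"
    and i lam u :: "nat \<Rightarrow> real \<Rightarrow> real"
  assumes N_pos: "N \<ge> 1"
    and A_01: "\<forall>j\<in>{1..N}. \<forall>k\<in>{1..N}. A j k \<in> {0, 1}"
    and A_sym: "\<forall>j\<in>{1..N}. \<forall>k\<in>{1..N}. A j k = A k j"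
    and beta_pos: "\<beta> > 0" and T_pos: "T > 0"
    and x0_range: "\<forall>j\<in>{1..N}. 0 \<le> x0 j \<and> x0 j \<le> 1"
    and c_pos: "\<forall>j\<in>{1..N}. c j > 0"
    and state_ode: "\<forall>j\<in>{1..N}. \<forall>t\<in>{0..T}.
        (i j has_real_derivative
           (\<beta> * (1 - i j t) * (\<Sum>k=1..N. A j k * i k t) + u j t * (1 - i j t)))
        (at t within {0..T})"
    and state_init: "\<forall>j\<in>{1..N}. i j 0 = x0 j"
    and adjoint_ode: "\<forall>j\<in>{1..N}. \<forall>t\<in>{0..T}.
        (lam j has_real_derivative
           (- \<beta> * (\<Sum>l=1..N. lam l t * (1 - i l t) * A l j)
            + \<beta> * lam j t * (\<Sum>k=1..N. A j k * i k t) + lam j t * u j t))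
        (at t within {0..T})"
    and adjoint_final: "\<forall>j\<in>{1..N}. lam j T = 1 / real N"
    and u_nonneg: "\<forall>j\<in>{1..N}. \<forall>t\<in>{0..T}. u j t \<ge> 0"
    and u_max: "\<forall>j\<in>{1..N}. \<forall>t\<in>{0..T}.
        deriv (\<lambda>v. c j * v\<^sup>2) (u j t) = lam j t * (1 - i j t)"
  shows "\<forall>j\<in>{1..N}. convex_on {0..T} (u j)"
proof -
  define I where "I = {1..N}"
  define D where "D = {0..T}"
  define Sg where "Sg = (\<lambda>j t. \<Sum>k=1..N. A j k * i k t)"
  have A01: "\<And>j k. j \<in> I \<Longrightarrow> k \<in> I \<Longrightarrow> 0 \<le> A j k \<and> A j k \<le> 1"
    using A_01 unfolding I_def by fastforce
  have di: "\<And>j t. j \<in> I \<Longrightarrow> t \<in> D \<Longrightarrow> (i j has_real_derivative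
           (\<beta> * (1 - i j t) * Sg j t + u j t * (1 - i j t))) (at t within D)"
    using state_ode unfolding I_def D_def Sg_def by blast
  have dl: "\<And>j t. j \<in> I \<Longrightarrow> t \<in> D \<Longrightarrow> (lam j has_real_derivative
           (- \<beta> * (\<Sum>l=1..N. lam l t * (1 - i l t) * A l j)
            + \<beta> * lam j t * Sg j t + lam j t * u j t)) (at t within D)"
    using adjoint_ode unfolding I_def D_def Sg_def by blast
  have ci: "\<And>j. j \<in> I \<Longrightarrow> continuous_on D (i j)"
    using di by (intro DERIV_continuous_on) blast
  have cl: "\<And>j. j \<in> I \<Longrightarrow> continuous_on D (lam j)"
    using dl by (intro DERIV_continuous_on) blast
  have u_eq: "\<And>j t. j \<in> I \<Longrightarrow> t \<in> D \<Longrightarrow> u j t = lam j t * (1 - i j t) / (2 * c j)"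
  proof -
    fix j t assume "j \<in> I" "t \<in> D"
    then have "2 * c j * u j t = lam j t * (1 - i j t)" "c j > 0"
      using u_max c_pos deriv_cv2 unfolding I_def D_def by auto
    then show "u j t = lam j t * (1 - i j t) / (2 * c j)" by (simp add: field_simps)
  qed
  have cu: "\<And>j. j \<in> I \<Longrightarrow> continuous_on D (u j)"
  proof -
    fix j assume j: "j \<in> I"
    have cj: "c j > 0" using c_pos j unfolding I_def by blast
    have "continuous_on D (\<lambda>t. lam j t * (1 - i j t) / (2 * c j))"
      using ci[OF j] cl[OF j] cj by (intro continuous_intros) auto
    then show "continuous_on D (u j)"
      by (rule continuous_on_eq) (use u_eq j in auto)
  qed
  define h where "h = (\<lambda>t. \<Sum>k\<in>I. \<bar>i k t\<bar> + \<bar>u k t\<bar>)"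
  have "continuous_on D h"
    unfolding h_def using ci cu by (intro continuous_intros) auto
  then have "bounded (h ` D)"
    unfolding D_def by (intro compact_imp_bounded compact_continuous_image) auto
  then obtain M where M: "\<forall>x\<in>h ` D. \<bar>x\<bar> \<le> M" using bounded_real by blast
  have hM: "\<And>t. t \<in> D \<Longrightarrow> h t \<le> M" using M by force
  have iM: "\<And>k t. k \<in> I \<Longrightarrow> t \<in> D \<Longrightarrow> \<bar>i k t\<bar> \<le> M"
  proof -
    fix k t assume "k \<in> I" "t \<in> D"
    then have "\<bar>i k t\<bar> + \<bar>u k t\<bar> \<le> h t" unfolding h_def
      by (intro member_le_sum) (auto simp: I_def)
    then show "\<bar>i k t\<bar> \<le> M" using hM[OF \<open>t \<in> D\<close>] by auto
  qed
  have uM: "\<And>k t. k \<in> I \<Longrightarrow> t \<in> D \<Longrightarrow> \<bar>u k t\<bar> \<le> M"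
  proof -
    fix k t assume "k \<in> I" "t \<in> D"
    then have "\<bar>i k t\<bar> + \<bar>u k t\<bar> \<le> h t" unfolding h_def
      by (intro member_le_sum) (auto simp: I_def)
    then show "\<bar>u k t\<bar> \<le> M" using hM[OF \<open>t \<in> D\<close>] by auto
  qed
  have SgM: "\<And>j t. j \<in> I \<Longrightarrow> t \<in> D \<Longrightarrow> \<bar>Sg j t\<bar> \<le> M"
  proof -
    fix j t assume j: "j \<in> I" and t: "t \<in> D"
    have "\<bar>Sg j t\<bar> \<le> (\<Sum>k\<in>I. \<bar>A j k * i k t\<bar>)" unfolding Sg_def I_def by (rule sum_abs)
    also have "\<dots> \<le> (\<Sum>k\<in>I. \<bar>i k t\<bar> + \<bar>u k t\<bar>)"
    proof (rule sum_mono)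
      fix k assume k: "k \<in> I"
      have "\<bar>A j k * i k t\<bar> = \<bar>A j k\<bar> * \<bar>i k t\<bar>" by (simp add: abs_mult)
      also have "\<dots> \<le> 1 * \<bar>i k t\<bar>" using A01[OF j k] by (intro mult_right_mono) auto
      finally show "\<bar>A j k * i k t\<bar> \<le> \<bar>i k t\<bar> + \<bar>u k t\<bar>" by simp
    qed
    also have "\<dots> \<le> M" using hM[OF t] unfolding h_def .
    finally show "\<bar>Sg j t\<bar> \<le> M" .
  qed
  have M0: "M \<ge> 0" using iM[of 1 0] N_pos T_pos by (auto simp: I_def D_def)
  have Dc: "D = {0..T}" by (simp add: D_def)
  have s_nn: "\<And>j t. j \<in> I \<Longrightarrow> t \<in> D \<Longrightarrow> i j t \<le> 1"
  proof -
    fix j t0 assume j: "j \<in> I" and t0: "t0 \<in> D"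
    define f where "f = (\<lambda>t. negsq (1 - i j t))"
    define f' where "f' = (\<lambda>t. 2 * min (1 - i j t) 0 * (0 - (\<beta> * (1 - i j t) * Sg j t + u j t * (1 - i j t))))"
    have df: "\<forall>t\<in>{0..T}. (f has_real_derivative f' t) (at t within {0..T})"
    proof
      fix t assume "t \<in> {0..T}"
      then have "((\<lambda>t. 1 - i j t) has_real_derivative 0 - (\<beta> * (1 - i j t) * Sg j t + u j t * (1 - i j t))) (at t within D)"
        using di[OF j] by (intro DERIV_diff DERIV_const) (auto simp: D_def)
      then show "(f has_real_derivative f' t) (at t within {0..T})"
        unfolding f_def f'_def D_def by (intro DERIV_chain'[OF _ negsq_deriv]) (simp add: mult.commute)
    qed
    have bd: "\<forall>t\<in>{0..T}. f' t \<le> (2 * (\<beta> * M + M)) * f t"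
    proof
      fix t assume t: "t \<in> {0..T}"
      define m where "m = min (1 - i j t) 0"
      define a where "a = \<beta> * Sg j t + u j t"
      have tD: "t \<in> D" using t by (simp add: D_def)
      have ab: "\<bar>a\<bar> \<le> \<beta> * M + M"
      proof -
        have "\<bar>a\<bar> \<le> \<bar>\<beta> * Sg j t\<bar> + \<bar>u j t\<bar>" unfolding a_def by (rule abs_triangle_ineq)
        moreover have "\<bar>\<beta> * Sg j t\<bar> \<le> \<beta> * M" using SgM[OF j tD] beta_pos
          by (auto simp: abs_mult intro!: mult_left_mono)
        moreover have "\<bar>u j t\<bar> \<le> M" using uM[OF j tD] .
        ultimately show ?thesis by linarith
      qed
      have ms: "m * (1 - i j t) = m^2" by (simp add: m_def min_def power2_eq_square)
      have "f' t = - 2 * (m * (1 - i j t)) * a" unfolding f'_def m_def[symmetric] a_def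
        by (simp add: algebra_simps)
      also have "\<dots> = 2 * m^2 * (- a)" by (simp only: ms)
      also have "\<dots> \<le> 2 * m^2 * \<bar>a\<bar>" by (intro mult_left_mono) auto
      also have "2 * m^2 * \<bar>a\<bar> \<le> 2 * m^2 * (\<beta> * M + M)" using ab by (intro mult_left_mono) auto
      finally show "f' t \<le> (2 * (\<beta> * M + M)) * f t" by (simp add: f_def negsq_def m_def algebra_simps)
    qed
    have "f t0 = 0"
      by (rule gronwall_zero[OF df bd]) (use t0 j x0_range state_init in \<open>auto simp: f_def negsq_def D_def I_def\<close>)
    then show "i j t0 \<le> 1" by (simp add: f_def negsq_def min_def split: if_splits)
  qed
  have i_nn: "\<And>j t. j \<in> I \<Longrightarrow> t \<in> D \<Longrightarrow> i j t \<ge> 0"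
  proof -
    define V where "V = (\<lambda>t. \<Sum>j\<in>I. negsq (i j t))"
    define V' where "V' = (\<lambda>t. \<Sum>j\<in>I. 2 * min (i j t) 0 * (\<beta> * (1 - i j t) * Sg j t + u j t * (1 - i j t)))"
    define C where "C = 4 * \<beta> * (1 + M) * real N"
    have cardI: "card I = N" by (simp add: I_def)
    have dV: "\<forall>t\<in>{0..T}. (V has_real_derivative V' t) (at t within {0..T})"
    proof
      fix t assume t: "t \<in> {0..T}"
      show "(V has_real_derivative V' t) (at t within {0..T})"
        unfolding V_def V'_def
      proof (rule DERIV_sum)
        fix n assume n: "n \<in> I"
        show "((\<lambda>x. negsq (i n x)) has_real_derivative 2 * min (i n t) 0 * (\<beta> * (1 - i n t) * Sg n t + u n t * (1 - i n t))) (at t within {0..T})"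
          using DERIV_chain'[OF di[OF n] negsq_deriv] t by (simp add: D_def mult.commute)
      qed
    qed
    have bV: "\<forall>t\<in>{0..T}. V' t \<le> C * V t"
    proof
      fix t assume t: "t \<in> {0..T}"
      then have tD: "t \<in> D" by (simp add: D_def)
      define mm where "mm = (\<lambda>k. min (i k t) 0)"
      define W where "W = (\<Sum>k\<in>I. (mm k)^2)"
      have VW: "V t = W" by (simp add: V_def W_def mm_def negsq_def)
      have per: "2 * mm j * (\<beta> * (1 - i j t) * Sg j t + u j t * (1 - i j t))
          \<le> 2 * \<beta> * (1 + M) * (real N * (mm j)^2 + W)" if j: "j \<in> I" for j
      proof -
        have m0: "mm j \<le> 0" by (simp add: mm_def)
        have s0: "1 - i j t \<ge> 0" using s_nn[OF j tD] by simp
        have s1: "1 - i j t \<le> 1 + M" using iM[OF j tD] by auto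
        have a: "mm j * (u j t * (1 - i j t)) \<le> 0"
          using m0 s0 u_nonneg j t by (intro mult_nonpos_nonneg mult_nonneg_nonneg) (auto simp: I_def)
        have b: "Sg j t \<ge> - (\<Sum>k\<in>I. \<bar>mm k\<bar>)"
        proof -
          have "- (\<Sum>k\<in>I. \<bar>mm k\<bar>) = (\<Sum>k\<in>I. - \<bar>mm k\<bar>)" by (simp add: sum_negf)
          also have "\<dots> \<le> (\<Sum>k\<in>I. A j k * i k t)"
          proof (rule sum_mono)
            fix k assume k: "k \<in> I"
            have "0 \<le> A j k" "A j k \<le> 1" using A01[OF j k] by auto
            then show "- \<bar>mm k\<bar> \<le> A j k * i k t"
            proof (cases "i k t \<ge> 0")
              case True
              then show ?thesis using \<open>0 \<le> A j k\<close> by (simp add: mm_def)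
            next
              case False
              then have "1 * i k t \<le> A j k * i k t"
                using \<open>A j k \<le> 1\<close> by (intro mult_right_mono_neg) auto
              then show ?thesis using False by (simp add: mm_def)
            qed
          qed
          finally show ?thesis by (simp add: Sg_def I_def)
        qed
        have c: "mm j * (1 - i j t) * Sg j t \<le> mm j * (1 - i j t) * (- (\<Sum>k\<in>I. \<bar>mm k\<bar>))"
          using b m0 s0 by (intro mult_left_mono_neg) (auto simp: mult_nonpos_nonneg)
        have d: "mm j * (1 - i j t) * (- (\<Sum>k\<in>I. \<bar>mm k\<bar>)) \<le> (1 + M) * (\<bar>mm j\<bar> * (\<Sum>k\<in>I. \<bar>mm k\<bar>))"
        proof -
          have "mm j * (1 - i j t) * (- (\<Sum>k\<in>I. \<bar>mm k\<bar>)) = (1 - i j t) * (\<bar>mm j\<bar> * (\<Sum>k\<in>I. \<bar>mm k\<bar>))"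
            using m0 by (simp add: abs_if)
          also have "\<dots> \<le> (1 + M) * (\<bar>mm j\<bar> * (\<Sum>k\<in>I. \<bar>mm k\<bar>))"
            using s1 by (intro mult_right_mono) (auto intro: sum_nonneg)
          finally show ?thesis .
        qed
        have e: "\<bar>mm j\<bar> * (\<Sum>k\<in>I. \<bar>mm k\<bar>) \<le> real N * (mm j)^2 + W"
        proof -
          have "\<bar>mm j\<bar> * (\<Sum>k\<in>I. \<bar>mm k\<bar>) = (\<Sum>k\<in>I. \<bar>mm j\<bar> * \<bar>mm k\<bar>)" by (simp add: sum_distrib_left)
          also have "\<dots> \<le> (\<Sum>k\<in>I. (mm j)^2 + (mm k)^2)"
          proof (rule sum_mono)
            fix k
            have "0 \<le> (\<bar>mm j\<bar> - \<bar>mm k\<bar>)^2" by simp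
            then have "2 * (\<bar>mm j\<bar> * \<bar>mm k\<bar>) \<le> (mm j)^2 + (mm k)^2"
              by (simp add: power2_eq_square algebra_simps abs_mult_self_eq)
            moreover have "0 \<le> \<bar>mm j\<bar> * \<bar>mm k\<bar>" by simp
            ultimately show "\<bar>mm j\<bar> * \<bar>mm k\<bar> \<le> (mm j)^2 + (mm k)^2" by linarith
          qed
          also have "\<dots> = real N * (mm j)^2 + W" by (simp add: sum.distrib W_def cardI)
          finally show ?thesis .
        qed
        have "(1 + M) * (\<bar>mm j\<bar> * (\<Sum>k\<in>I. \<bar>mm k\<bar>)) \<le> (1 + M) * (real N * (mm j)^2 + W)"
          using e M0 by (intro mult_left_mono) auto
        with c d have cd: "mm j * (1 - i j t) * Sg j t \<le> (1 + M) * (real N * (mm j)^2 + W)" by linarith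
        have "2 * mm j * (\<beta> * (1 - i j t) * Sg j t + u j t * (1 - i j t))
           = 2 * \<beta> * (mm j * (1 - i j t) * Sg j t) + 2 * (mm j * (u j t * (1 - i j t)))"
          by (simp add: algebra_simps)
        also have "\<dots> \<le> 2 * \<beta> * ((1 + M) * (real N * (mm j)^2 + W)) + 0"
          using cd a beta_pos by (intro add_mono mult_left_mono) auto
        finally show ?thesis by simp
      qed
      have "V' t = (\<Sum>j\<in>I. 2 * mm j * (\<beta> * (1 - i j t) * Sg j t + u j t * (1 - i j t)))"
        by (simp add: V'_def mm_def)
      also have "\<dots> \<le> (\<Sum>j\<in>I. 2 * \<beta> * (1 + M) * (real N * (mm j)^2 + W))"
        by (rule sum_mono) (rule per)
      also have "\<dots> = 2 * \<beta> * (1 + M) * (real N * W + real N * W)"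
        by (simp add: sum_distrib_left[symmetric] sum.distrib cardI W_def)
      also have "\<dots> = C * V t" by (simp add: C_def VW algebra_simps)
      finally show "V' t \<le> C * V t" .
    qed
    have Vnn: "\<forall>t\<in>{0..T}. V t \<ge> 0" by (auto simp: V_def negsq_def intro: sum_nonneg)
    have V0: "V 0 = 0" using x0_range state_init
      by (auto simp: V_def negsq_def I_def intro!: sum.neutral)
    fix j t assume j: "j \<in> I" and t: "t \<in> D"
    have "V t = 0" by (rule gronwall_zero[OF dV bV Vnn V0]) (use t in \<open>simp add: D_def\<close>)
    then have "negsq (i j t) = 0"
      using j unfolding V_def by (subst (asm) sum_nonneg_eq_0_iff) (auto simp: negsq_def I_def)
    then show "i j t \<ge> 0" by (simp add: negsq_def min_def split: if_splits)
  qed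
  define p where "p = (\<lambda>j t. lam j t * (1 - i j t))"
  define q where "q = (\<lambda>j t. \<Sum>l=1..N. lam l t * (1 - i l t) * A l j)"
  have ds: "\<And>j t. j \<in> I \<Longrightarrow> t \<in> D \<Longrightarrow> ((\<lambda>t. 1 - i j t) has_real_derivative
           0 - (\<beta> * (1 - i j t) * Sg j t + u j t * (1 - i j t))) (at t within D)"
    using di by (intro DERIV_diff DERIV_const) auto
  have dp: "\<And>j t. j \<in> I \<Longrightarrow> t \<in> D \<Longrightarrow> (p j has_real_derivative - \<beta> * (1 - i j t) * q j t) (at t within D)"
  proof -
    fix j t assume j: "j \<in> I" and t: "t \<in> D"
    have "((\<lambda>t. lam j t * (1 - i j t)) has_real_derivative
       lam j t * (0 - (\<beta> * (1 - i j t) * Sg j t + u j t * (1 - i j t))) +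
       (- \<beta> * (\<Sum>l=1..N. lam l t * (1 - i l t) * A l j) + \<beta> * lam j t * Sg j t + lam j t * u j t) * (1 - i j t))
       (at t within D)"
      by (rule DERIV_mult'[OF dl[OF j t] ds[OF j t]])
    then show "(p j has_real_derivative - \<beta> * (1 - i j t) * q j t) (at t within D)"
      unfolding p_def q_def by (simp add: algebra_simps)
  qed
  have p_nn: "\<And>j t. j \<in> I \<Longrightarrow> t \<in> D \<Longrightarrow> p j t \<ge> 0"
  proof -
    fix j t assume j: "j \<in> I" and t: "t \<in> D"
    have cj: "c j > 0" using c_pos j unfolding I_def by blast
    have "p j t = 2 * c j * u j t" using u_eq[OF j t] cj by (simp add: p_def)
    moreover have "u j t \<ge> 0" using u_nonneg j t by (simp add: I_def D_def)
    ultimately show "p j t \<ge> 0" using cj by simp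
  qed
  have q_nn: "\<And>j t. j \<in> I \<Longrightarrow> t \<in> D \<Longrightarrow> q j t \<ge> 0"
    unfolding q_def using p_nn A01 by (intro sum_nonneg) (auto simp: p_def I_def)
  have s_anti: "\<And>j x y. j \<in> I \<Longrightarrow> 0 \<le> x \<Longrightarrow> x \<le> y \<Longrightarrow> y \<le> T \<Longrightarrow> 1 - i j y \<le> 1 - i j x"
  proof -
    fix j x y assume j: "j \<in> I" and xy: "0 \<le> x" "x \<le> y" "y \<le> T"
    show "1 - i j y \<le> 1 - i j x"
    proof (rule antitone_within[OF _ _ xy])
      show "\<forall>t\<in>{0..T}. ((\<lambda>t. 1 - i j t) has_real_derivative 0 - (\<beta> * (1 - i j t) * Sg j t + u j t * (1 - i j t))) (at t within {0..T})"
        using ds[OF j] by (simp add: D_def)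
      show "\<forall>t\<in>{0..T}. 0 - (\<beta> * (1 - i j t) * Sg j t + u j t * (1 - i j t)) \<le> 0"
      proof
        fix t assume t: "t \<in> {0..T}"
        then have tD: "t \<in> D" by (simp add: D_def)
        have "Sg j t \<ge> 0" unfolding Sg_def using A01 i_nn j tD
          by (intro sum_nonneg mult_nonneg_nonneg) (auto simp: I_def)
        moreover have "1 - i j t \<ge> 0" using s_nn[OF j tD] by simp
        moreover have "u j t \<ge> 0" using u_nonneg j t by (simp add: I_def)
        ultimately show "0 - (\<beta> * (1 - i j t) * Sg j t + u j t * (1 - i j t)) \<le> 0"
          using beta_pos by (smt (verit) mult_nonneg_nonneg)
      qed
    qed
  qed
  have p_anti: "\<And>j x y. j \<in> I \<Longrightarrow> 0 \<le> x \<Longrightarrow> x \<le> y \<Longrightarrow> y \<le> T \<Longrightarrow> p j y \<le> p j x"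
  proof -
    fix j x y assume j: "j \<in> I" and xy: "0 \<le> x" "x \<le> y" "y \<le> T"
    show "p j y \<le> p j x"
    proof (rule antitone_within[OF _ _ xy])
      show "\<forall>t\<in>{0..T}. (p j has_real_derivative - \<beta> * (1 - i j t) * q j t) (at t within {0..T})"
        using dp[OF j] by (simp add: D_def)
      show "\<forall>t\<in>{0..T}. - \<beta> * (1 - i j t) * q j t \<le> 0"
      proof
        fix t assume "t \<in> {0..T}"
        then have tD: "t \<in> D" by (simp add: D_def)
        show "- \<beta> * (1 - i j t) * q j t \<le> 0"
          using s_nn[OF j tD] q_nn[OF j tD] beta_pos by (simp add: mult_nonneg_nonneg)
      qed
    qed
  qed
  have q_anti: "\<And>j x y. j \<in> I \<Longrightarrow> 0 \<le> x \<Longrightarrow> x \<le> y \<Longrightarrow> y \<le> T \<Longrightarrow> q j y \<le> q j x"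
    unfolding q_def using p_anti A01 by (intro sum_mono mult_right_mono) (auto simp: p_def I_def)
  show ?thesis
  proof
    fix j assume jN: "j \<in> {1..N}"
    then have j: "j \<in> I" by (simp add: I_def)
    have cp: "convex_on {0..T} (p j)"
    proof (rule convex_within)
      show "\<forall>t\<in>{0..T}. (p j has_real_derivative - \<beta> * (1 - i j t) * q j t) (at t within {0..T})"
        using dp[OF j] by (simp add: D_def)
      fix x y assume x: "x \<in> {0..T}" and y: "y \<in> {0..T}" and xy: "x \<le> y"
      have "(1 - i j y) * q j y \<le> (1 - i j x) * q j x"
        using s_anti[OF j _ xy] q_anti[OF j _ xy] x y s_nn[OF j] q_nn[OF j]
        by (intro mult_mono) (auto simp: D_def)
      then show "- \<beta> * (1 - i j x) * q j x \<le> - \<beta> * (1 - i j y) * q j y"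
        using beta_pos by (simp add: mult.assoc)
    qed
    have "convex_on {0..T} (\<lambda>t. (1 / (2 * c j)) * p j t)"
      using cp by (intro convex_on_cmul) (use bspec[OF c_pos jN] in auto)
    then show "convex_on {0..T} (u j)"
      by (rule convex_on_eq_mine[rotated 2]) (use u_eq j in \<open>auto simp: D_def p_def\<close>)
  qed
qed

end
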